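(* Let $\langle S,L,\tau,\ell\rangle$ be a labelled Markov chain and let $R$ be a bisimulation with $\simeq\,\subseteq R\subseteq\,\sim$. For all $s,t,u\in S$ with $(s,t)\in\mathrm{Filter}(R)$ and $(t,u)\in\mathrm{Filter}(R)$, if $s\simeq t$ or $t\simeq u$, then $(s,u)\in\mathrm{Filter}(R)$.
   Context: Labelled Markov chain $\langle S,L,\tau,\ell\rangle$: finite $S$, finite $L$, $\tau:S\to\mathcal{D}(S)$, $\ell:S\to L$, $|\ell(S)|\ge2$. $\Omega(\mu,\nu)$ = couplings (distributions on $S\times S$ with marginals $\mu,\nu$). A bisimulation is an equivalence relation $R\subseteq S\times S$ such that for all $(s,t)\in R$, $\ell(s)=\ell(t)$ and some $\omega\in\Omega(\tau(s),\tau(t))$ has $\mathrm{support}(\omega)\subseteq R$; $\sim$ is bisimilarity (union of all bisimulations). $S^2_\Delta=\{(s,s)\}$, $S^2_1=\{(s,t)\mid\ell(s)\ne\ell(t)\}$. A policy is $P:S\times S\to\mathcal{D}(S\times S)$ with $P(s,t)\in\Omega(\tau(s),\tau(t))$ for $(s,t)\notin S^2_1$ and $P(s,t)$ the point mass at $(s,t)$ for $(s,t)\in S^2_1$; $\mathcal{P}$ = set of policies, inducing Markov chains $\langle S\times S,P\rangle$. Robust bisimilarity: $s\simeq t$ iff some $P\in\mathcal{P}$ makes $(s,t)$ reach $S^2_\Delta$ with probability $1$ in $\langle S\times S,P\rangle$. $R$ supports a path $(u_1,v_1)\dots(u_n,v_n)$ of $\langle S\times S,P\rangle$ if $(u_i,v_i)\in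 R$ and $\mathrm{support}(P(u_i,v_i))\subseteq R$ for all $i$. $\mathrm{Filter}(R)=\{(s,t)\in R\mid\exists P\in\mathcal{P}$ such that $R$ supports a path from $(s,t)$ to $S^2_\Delta$ in $\langle S\times S,P\rangle\}$. *)

theory Defs
  imports "HOL-Probability.Probability"
begin

definition couplings :: "'s pmf \<Rightarrow> 's pmf \<Rightarrow> ('s \<times> 's) pmf set" where
  "couplings \<mu> \<nu> = {\<omega>. map_pmf fst \<omega> = \<mu> \<and> map_pmf snd \<omega> = \<nu>}"

definition bisimulation :: "('s \<Rightarrow> 's pmf) \<Rightarrow> ('s \<Rightarrow> 'l) \<Rightarrow> ('s \<times> 's) set \<Rightarrow> bool" where
  "bisimulation \<tau> lab R \<longleftrightarrow> equiv UNIV R \<and>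
     (\<forall>(s,t)\<in>R. lab s = lab t \<and> (\<exists>\<omega>\<in>couplings (\<tau> s) (\<tau> t). set_pmf \<omega> \<subseteq> R))"

definition bisimilarity :: "('s \<Rightarrow> 's pmf) \<Rightarrow> ('s \<Rightarrow> 'l) \<Rightarrow> ('s \<times> 's) set" where
  "bisimilarity \<tau> lab = \<Union>{R. bisimulation \<tau> lab R}"

definition diag_pairs :: "('s \<times> 's) set" where
  "diag_pairs = {(s,s) | s. True}"

definition diff_label :: "('s \<Rightarrow> 'l) \<Rightarrow> ('s \<times> 's) set" where
  "diff_label lab = {(s,t). lab s \<noteq> lab t}"

definition policies :: "('s \<Rightarrow> 's pmf) \<Rightarrow> ('s \<Rightarrow> 'l) \<Rightarrow> (('s \<times> 's) \<Rightarrow> ('s \<times> 's) pmf) set" where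
  "policies \<tau> lab = {P. \<forall>st.
      (st \<notin> diff_label lab \<longrightarrow> P st \<in> couplings (\<tau> (fst st)) (\<tau> (snd st))) \<and>
      (st \<in> diff_label lab \<longrightarrow> P st = return_pmf st)}"

primrec reach_within :: "('a \<Rightarrow> 'a pmf) \<Rightarrow> 'a set \<Rightarrow> nat \<Rightarrow> 'a \<Rightarrow> real" where
  "reach_within P T 0 z = (if z \<in> T then 1 else 0)"
| "reach_within P T (Suc n) z =
     (if z \<in> T then 1 else measure_pmf.expectation (P z) (reach_within P T n))"

text \<open>Reaching T with probability 1 (probability of eventually reaching T is the limit
  of the probabilities of reaching T within n steps).\<close>
definition reaches_almost_surely :: "('a \<Rightarrow> 'a pmf) \<Rightarrow> 'a set \<Rightarrow> 'a \<Rightarrow> bool" where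
  "reaches_almost_surely P T z \<longleftrightarrow> (\<lambda>n. reach_within P T n z) \<longlonglongrightarrow> 1"

definition robust_bisimilarity :: "('s \<Rightarrow> 's pmf) \<Rightarrow> ('s \<Rightarrow> 'l) \<Rightarrow> ('s \<times> 's) set" where
  "robust_bisimilarity \<tau> lab =
     {(s,t). \<exists>P\<in>policies \<tau> lab. reaches_almost_surely P diag_pairs (s,t)}"

definition is_path :: "('a \<Rightarrow> 'a pmf) \<Rightarrow> 'a list \<Rightarrow> bool" where
  "is_path P xs \<longleftrightarrow> xs \<noteq> [] \<and> (\<forall>i. Suc i < length xs \<longrightarrow> xs ! Suc i \<in> set_pmf (P (xs ! i)))"

definition supports_path :: "'a set \<Rightarrow> ('a \<Rightarrow> 'a pmf) \<Rightarrow> 'a list \<Rightarrow> bool" where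
  "supports_path R P xs \<longleftrightarrow> (\<forall>x\<in>set xs. x \<in> R \<and> set_pmf (P x) \<subseteq> R)"

definition filter_rel :: "('s \<Rightarrow> 's pmf) \<Rightarrow> ('s \<Rightarrow> 'l) \<Rightarrow> ('s \<times> 's) set \<Rightarrow> ('s \<times> 's) set" where
  "filter_rel \<tau> lab R = {(s,t) \<in> R. \<exists>P\<in>policies \<tau> lab. \<exists>xs.
      is_path P xs \<and> hd xs = (s,t) \<and> last xs \<in> diag_pairs \<and> supports_path R P xs}"

end

theory Submission
  imports Defs
begin


lemma is_path_Cons:
  "is_path P (x # xs) \<longleftrightarrow> (xs = [] \<or> (hd xs \<in> set_pmf (P x) \<and> is_path P xs))"
proof (cases xs)
  case Nil then show ?thesis by (simp add: is_path_def)
next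
  case (Cons y ys)
  have "(\<forall>i. Suc i < length (x#y#ys) \<longrightarrow> (x#y#ys) ! Suc i \<in> set_pmf (P ((x#y#ys) ! i)))
     \<longleftrightarrow> y \<in> set_pmf (P x) \<and> (\<forall>i. Suc i < length (y#ys) \<longrightarrow> (y#ys) ! Suc i \<in> set_pmf (P ((y#ys) ! i)))"
    (is "?L \<longleftrightarrow> ?R")
  proof
    assume L: ?L
    show ?R
    proof
      show "y \<in> set_pmf (P x)" using L[rule_format, of 0] by simp
      show "\<forall>i. Suc i < length (y#ys) \<longrightarrow> (y#ys) ! Suc i \<in> set_pmf (P ((y#ys) ! i))"
      proof (intro allI impI)
        fix i assume "Suc i < length (y#ys)"
        then show "(y#ys) ! Suc i \<in> set_pmf (P ((y#ys) ! i))" using L[rule_format, of "Suc i"] by simp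
      qed
    qed
  next
    assume R: ?R
    show ?L
    proof (intro allI impI)
      fix i assume i: "Suc i < length (x#y#ys)"
      show "(x#y#ys) ! Suc i \<in> set_pmf (P ((x#y#ys) ! i))"
      proof (cases i)
        case 0 then show ?thesis using R by simp
      next
        case (Suc j) then show ?thesis using R i by simp
      qed
    qed
  qed
  then show ?thesis using Cons by (simp add: is_path_def)
qed

lemma is_path_drop:
  assumes "is_path P xs" "i < length xs"
  shows "is_path P (drop i xs)"
  unfolding is_path_def
proof (intro conjI allI impI)
  show "drop i xs \<noteq> []" using assms(2) by simp
  fix j assume j: "Suc j < length (drop i xs)"
  then have "Suc (i + j) < length xs" by simp
  then have "xs ! Suc (i + j) \<in> set_pmf (P (xs ! (i + j)))" using assms(1) unfolding is_path_def by blast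
  then show "drop i xs ! Suc j \<in> set_pmf (P (drop i xs ! j))" using j by simp
qed


lemma glue:
  fixes pq :: "('a \<times> 'b) pmf" and qr :: "('b \<times> 'c) pmf"
  assumes "map_pmf snd pq = map_pmf fst qr"
  shows "\<exists>pr. map_pmf fst pr = map_pmf fst pq \<and> map_pmf snd pr = map_pmf snd qr \<and>
     set_pmf pr = {(x,z). \<exists>y. (x,y) \<in> set_pmf pq \<and> (y,z) \<in> set_pmf qr}"
proof -
  define q where "q = map_pmf fst qr"
  define pr where "pr =
        bind_pmf pq (\<lambda>xy. bind_pmf (cond_pmf qr {yz. fst yz = snd xy})
          (\<lambda>yz. return_pmf (fst xy, snd yz)))"
  have wd: "\<And>y. y \<in> set_pmf q \<Longrightarrow> set_pmf qr \<inter> {yz. fst yz = y} \<noteq> {}"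
    by (force simp: q_def)
  have q: "q = map_pmf snd pq" using assms q_def by simp
  have wd2: "\<And>xy. xy \<in> set_pmf pq \<Longrightarrow> set_pmf qr \<inter> {yz. fst yz = snd xy} \<noteq> {}"
    using wd q by auto
  have "set_pmf pr = {(x,z). \<exists>y. (x,y) \<in> set_pmf pq \<and> (y,z) \<in> set_pmf qr}"
  proof (rule set_eqI; rule iffI)
    fix w assume "w \<in> set_pmf pr"
    then obtain xy yz where h: "xy \<in> set_pmf pq" "yz \<in> set_pmf (cond_pmf qr {yz. fst yz = snd xy})"
        "w = (fst xy, snd yz)"
      unfolding pr_def by (auto simp: set_bind_pmf)
    then have "yz \<in> set_pmf qr" "fst yz = snd xy" using wd2[OF h(1)] by auto
    then show "w \<in> {(x,z). \<exists>y. (x,y) \<in> set_pmf pq \<and> (y,z) \<in> set_pmf qr}"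
      using h by (cases xy, cases yz) auto
  next
    fix w assume "w \<in> {(x,z). \<exists>y. (x,y) \<in> set_pmf pq \<and> (y,z) \<in> set_pmf qr}"
    then obtain x y z where w: "w = (x,z)" "(x,y) \<in> set_pmf pq" "(y,z) \<in> set_pmf qr" by auto
    have "(y,z) \<in> set_pmf (cond_pmf qr {yz. fst yz = snd (x,y)})"
      using wd2[OF w(2)] w(3) by simp
    then have "(x,z) \<in> set_pmf (bind_pmf (cond_pmf qr {yz. fst yz = snd (x,y)})
          (\<lambda>yz. return_pmf (fst (x,y), snd yz)))"
      by (auto simp: set_bind_pmf intro!: bexI[of _ "(y,z)"])
    then show "w \<in> set_pmf pr"
      unfolding pr_def w(1) set_bind_pmf using w(2) by blast
  qed
  moreover have "map_pmf snd pr = map_pmf snd qr"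
  proof -
    have "map_pmf snd pr = map_pmf snd (bind_pmf q (\<lambda>y. cond_pmf qr {yz. fst yz = y}))"
      by (simp add: pr_def q split_beta bind_map_pmf map_pmf_def[symmetric] map_bind_pmf map_pmf_comp)
    then show ?thesis
      unfolding q_def bind_map_pmf by (subst (asm) bind_cond_pmf_cancel) (auto simp: eq_commute)
  qed
  moreover have "map_pmf fst pr = map_pmf fst pq"
    by (simp add: pr_def map_bind_pmf split_beta map_pmf_def[symmetric] map_pmf_comp)
  ultimately show ?thesis by blast
qed


lemma expect_sum:
  fixes f :: "'a::finite \<Rightarrow> real"
  shows "measure_pmf.expectation M f = (\<Sum>a\<in>UNIV. f a * pmf M a)"
  by (rule integral_measure_pmf_real) auto

lemma reach_bounds:
  fixes P :: "'a::finite \<Rightarrow> 'a pmf"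
  shows "0 \<le> reach_within P T n z \<and> reach_within P T n z \<le> 1"
proof (induction n arbitrary: z)
  case 0 then show ?case by simp
next
  case (Suc n)
  have s1: "(\<Sum>a\<in>UNIV. pmf (P z) a) = 1" by (rule sum_pmf_eq_1) auto
  have "(\<Sum>a\<in>UNIV. reach_within P T n a * pmf (P z) a) \<le> (\<Sum>a\<in>UNIV. pmf (P z) a)"
  proof (rule sum_mono)
    fix a :: 'a
    have "0 \<le> reach_within P T n a" "reach_within P T n a \<le> 1" using Suc.IH[of a] by auto
    then show "reach_within P T n a * pmf (P z) a \<le> pmf (P z) a"
      by (intro mult_left_le_one_le) (auto simp: pmf_nonneg)
  qed
  moreover have "0 \<le> (\<Sum>a\<in>UNIV. reach_within P T n a * pmf (P z) a)"
    using Suc.IH by (intro sum_nonneg) (simp add: pmf_nonneg)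
  ultimately show ?case using s1 by (simp add: expect_sum)
qed

lemma reach_succ:
  fixes P :: "'a::finite \<Rightarrow> 'a pmf"
  assumes as: "reaches_almost_surely P T x" and xT: "x \<notin> T" and y: "y \<in> set_pmf (P x)"
  shows "reaches_almost_surely P T y"
proof -
  define r where "r = (\<lambda>n. reach_within P T n)"
  define p where "p = pmf (P x) y"
  have p: "p > 0" using y by (simp add: p_def pmf_positive_iff)
  have s1: "(\<Sum>a\<in>UNIV. pmf (P x) a) = 1" by (rule sum_pmf_eq_1) auto
  have key: "1 - r n y \<le> (1 - r (Suc n) x) / p" for n
  proof -
    have "(1 - r n y) * p \<le> (\<Sum>a\<in>UNIV. (1 - r n a) * pmf (P x) a)"
      unfolding p_def
      by (rule member_le_sum[where f="\<lambda>a. (1 - r n a) * pmf (P x) a"])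
         (auto simp: r_def reach_bounds)
    also have "\<dots> = (\<Sum>a\<in>UNIV. pmf (P x) a) - (\<Sum>a\<in>UNIV. r n a * pmf (P x) a)"
      by (simp add: algebra_simps sum_subtractf)
    also have "\<dots> = 1 - r (Suc n) x"
      using s1 xT by (simp add: r_def expect_sum)
    finally show ?thesis using p by (simp add: field_simps)
  qed
  have "(\<lambda>n. r (Suc n) x) \<longlonglongrightarrow> 1"
    using as unfolding reaches_almost_surely_def r_def by (rule LIMSEQ_Suc)
  then have "(\<lambda>n. (1 - r (Suc n) x) / p) \<longlonglongrightarrow> (1 - 1) / p"
    using p by (intro tendsto_intros) auto
  then have t0: "(\<lambda>n. (1 - r (Suc n) x) / p) \<longlonglongrightarrow> 0" by simp
  have "(\<lambda>n. 1 - r n y) \<longlonglongrightarrow> 0"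
  proof (rule tendsto_sandwich[OF _ _ tendsto_const t0])
    show "\<forall>\<^sub>F n in sequentially. 0 \<le> 1 - r n y" by (simp add: r_def reach_bounds)
    show "\<forall>\<^sub>F n in sequentially. 1 - r n y \<le> (1 - r (Suc n) x) / p" using key by simp
  qed
  then have "(\<lambda>n. 1 - (1 - r n y)) \<longlonglongrightarrow> 1 - 0"
    by (intro tendsto_intros)
  then show ?thesis by (simp add: reaches_almost_surely_def r_def)
qed

lemma reach_pos:
  fixes P :: "'a::finite \<Rightarrow> 'a pmf"
  assumes as: "reaches_almost_surely P T x"
  shows "\<exists>n. reach_within P T n x > 0"
proof -
  have "eventually (\<lambda>n. reach_within P T n x > 0) sequentially"
    using as unfolding reaches_almost_surely_def by (rule order_tendstoD) simp
  then show ?thesis by (meson eventually_sequentially order_refl)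
qed

lemma reach_pos_succ:
  fixes P :: "'a::finite \<Rightarrow> 'a pmf"
  assumes "reach_within P T (Suc n) x > 0" "x \<notin> T"
  shows "\<exists>y\<in>set_pmf (P x). reach_within P T n y > 0"
proof (rule ccontr)
  assume nt: "\<not> ?thesis"
  have "\<forall>a. reach_within P T n a * pmf (P x) a \<le> 0"
  proof
    fix a
    show "reach_within P T n a * pmf (P x) a \<le> 0"
    proof (cases "a \<in> set_pmf (P x)")
      case True
      then have "reach_within P T n a \<le> 0" using nt by auto
      then show ?thesis by (simp add: mult_nonpos_nonneg pmf_nonneg)
    next
      case False then show ?thesis by (simp add: set_pmf_iff)
    qed
  qed
  then have "(\<Sum>a\<in>UNIV. reach_within P T n a * pmf (P x) a) \<le> 0"
    by (intro sum_nonpos) auto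
  then show False using assms by (simp add: expect_sum)
qed



inductive_set FF :: "('s \<Rightarrow> 's pmf) \<Rightarrow> ('s \<times> 's) set \<Rightarrow> ('s \<times> 's) set" for \<tau> R where
  diag: "(a,a) \<in> FF \<tau> R"
| step: "x \<in> R \<Longrightarrow> \<omega> \<in> couplings (\<tau> (fst x)) (\<tau> (snd x)) \<Longrightarrow> set_pmf \<omega> \<subseteq> R
     \<Longrightarrow> y \<in> set_pmf \<omega> \<Longrightarrow> y \<in> FF \<tau> R \<Longrightarrow> x \<in> FF \<tau> R"

lemma is_path_cong:
  assumes "\<forall>z\<in>set xs. P' z = P z"
  shows "is_path P' xs = is_path P xs"
  using assms unfolding is_path_def by (auto simp: nth_mem)

lemma supports_path_cong:
  assumes "\<forall>z\<in>set xs. P' z = P z"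
  shows "supports_path R P' xs = supports_path R P xs"
  using assms unfolding supports_path_def by auto

lemma filter_rel_iff:
  "x \<in> filter_rel \<tau> lab R \<longleftrightarrow> x \<in> R \<and> (\<exists>P\<in>policies \<tau> lab. \<exists>xs.
      is_path P xs \<and> hd xs = x \<and> last xs \<in> diag_pairs \<and> supports_path R P xs)"
  by (cases x) (simp add: filter_rel_def)

lemma RB_iff:
  "x \<in> robust_bisimilarity \<tau> lab \<longleftrightarrow> (\<exists>P\<in>policies \<tau> lab. reaches_almost_surely P diag_pairs x)"
  by (cases x) (simp add: robust_bisimilarity_def)

lemma policy_coupling:
  "P \<in> policies \<tau> lab \<Longrightarrow> x \<notin> diff_label lab \<Longrightarrow> P x \<in> couplings (\<tau> (fst x)) (\<tau> (snd x))"
  unfolding policies_def by blast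

lemma swap_diag: "prod.swap x \<in> diag_pairs \<longleftrightarrow> x \<in> diag_pairs"
  by (cases x) (auto simp: diag_pairs_def)

lemma swap_diff: "prod.swap x \<in> diff_label lab \<longleftrightarrow> x \<in> diff_label lab"
  by (cases x) (auto simp: diff_label_def)

lemma reach_swap:
  fixes P :: "('s::finite \<times> 's) \<Rightarrow> ('s \<times> 's) pmf"
  shows "reach_within (\<lambda>x. map_pmf prod.swap (P (prod.swap x))) diag_pairs n x
       = reach_within P diag_pairs n (prod.swap x)"
proof (induction n arbitrary: x)
  case 0 then show ?case by (simp add: swap_diag)
next
  case (Suc n) then show ?case by (simp add: swap_diag)
qed

lemma RB_swap:
  fixes \<tau> :: "'s::finite \<Rightarrow> 's pmf"
  assumes "x \<in> robust_bisimilarity \<tau> lab"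
  shows "prod.swap x \<in> robust_bisimilarity \<tau> lab"
proof -
  obtain P where P: "P \<in> policies \<tau> lab" "reaches_almost_surely P diag_pairs x"
    using assms by (auto simp: RB_iff)
  define P' where "P' = (\<lambda>x. map_pmf prod.swap (P (prod.swap x)))"
  have "P' \<in> policies \<tau> lab"
    unfolding policies_def
  proof (intro CollectI allI conjI impI)
    fix st :: "'s \<times> 's"
    assume "st \<notin> diff_label lab"
    then have "P (prod.swap st) \<in> couplings (\<tau> (fst (prod.swap st))) (\<tau> (snd (prod.swap st)))"
      using P(1) by (intro policy_coupling) (auto simp: swap_diff)
    then show "P' st \<in> couplings (\<tau> (fst st)) (\<tau> (snd st))"
      unfolding P'_def couplings_def by (simp add: pmf.map_comp comp_def)
  next
    fix st :: "'s \<times> 's"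
    assume "st \<in> diff_label lab"
    then have "prod.swap st \<in> diff_label lab" by (simp add: swap_diff)
    then have "P (prod.swap st) = return_pmf (prod.swap st)"
      using P(1) unfolding policies_def by blast
    then show "P' st = return_pmf st" by (simp add: P'_def)
  qed
  moreover have "reaches_almost_surely P' diag_pairs (prod.swap x)"
    using P(2) unfolding reaches_almost_surely_def P'_def reach_swap by simp
  ultimately show ?thesis by (auto simp: RB_iff)
qed

context
  fixes \<tau> :: "'s::finite \<Rightarrow> 's pmf" and lab :: "'s \<Rightarrow> 'l" and R :: "('s \<times> 's) set"
  assumes bis: "bisimulation \<tau> lab R"
begin

lemma R_refl: "(a,a) \<in> R"
  using bis unfolding bisimulation_def equiv_def by (auto dest: refl_onD)

lemma R_sym: "(a,b) \<in> R \<Longrightarrow> (b,a) \<in> R"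
  using bis unfolding bisimulation_def equiv_def by (auto dest: symD)

lemma R_trans: "(a,b) \<in> R \<Longrightarrow> (b,c) \<in> R \<Longrightarrow> (a,c) \<in> R"
  using bis unfolding bisimulation_def equiv_def by (auto dest: transD)

lemma R_nd: "x \<in> R \<Longrightarrow> x \<notin> diff_label lab"
  using bis unfolding bisimulation_def diff_label_def by auto

lemma R_coupling: "x \<in> R \<Longrightarrow> \<exists>\<omega>\<in>couplings (\<tau> (fst x)) (\<tau> (snd x)). set_pmf \<omega> \<subseteq> R"
  using bis unfolding bisimulation_def by (cases x) fastforce

lemma F_sub_filter: "x \<in> FF \<tau> R \<Longrightarrow> x \<in> filter_rel \<tau> lab R"
proof (induction rule: FF.induct)
  case (diag a)
  obtain \<omega> where \<omega>: "\<omega> \<in> couplings (\<tau> a) (\<tau> a)" "set_pmf \<omega> \<subseteq> R"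
    using R_coupling[OF R_refl[of a]] by auto
  define P where "P = (\<lambda>st. if st \<in> diff_label lab then return_pmf st else
      if st = (a,a) then \<omega> else pair_pmf (\<tau> (fst st)) (\<tau> (snd st)))"
  have "P \<in> policies \<tau> lab"
    using \<omega>(1) unfolding policies_def P_def couplings_def
    by (auto simp: map_fst_pair_pmf map_snd_pair_pmf diff_label_def)
  moreover have "is_path P [(a,a)]" by (simp add: is_path_def)
  moreover have "supports_path R P [(a,a)]"
    using \<omega>(2) R_refl[of a] by (simp add: supports_path_def P_def diff_label_def)
  ultimately show ?case using R_refl[of a]
    by (auto simp: filter_rel_iff diag_pairs_def intro!: bexI[of _ P] exI[of _ "[(a,a)]"])
next
  case (step x \<omega> y)
  obtain P xs where P: "P \<in> policies \<tau> lab" "is_path P xs" "hd xs = y" "last xs \<in> diag_pairs"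
    "supports_path R P xs"
    using step.IH by (auto simp: filter_rel_iff)
  show ?case
  proof (cases "x \<in> set xs")
    case True
    then obtain i where i: "i < length xs" "xs ! i = x" by (auto simp: in_set_conv_nth)
    have "is_path P (drop i xs)" using is_path_drop[OF P(2) i(1)] .
    moreover have "hd (drop i xs) = x" using i by (simp add: hd_drop_conv_nth)
    moreover have "last (drop i xs) \<in> diag_pairs" using i P(4) by simp
    moreover have "supports_path R P (drop i xs)"
      using P(5) set_drop_subset[of i xs] unfolding supports_path_def by blast
    ultimately show ?thesis using P(1) step.hyps(1) by (auto simp: filter_rel_iff)
  next
    case False
    define P' where "P' = P(x := \<omega>)"
    have agree: "\<forall>z\<in>set xs. P' z = P z" using False by (auto simp: P'_def)
    have "P' \<in> policies \<tau> lab"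
      using P(1) step.hyps(2) R_nd[OF step.hyps(1)] unfolding policies_def P'_def by auto
    moreover have "xs \<noteq> []" using P(2) by (simp add: is_path_def)
    moreover have "is_path P' (x # xs)"
    proof -
      have "is_path P' xs" using is_path_cong[OF agree] P(2) by simp
      moreover have "hd xs \<in> set_pmf (P' x)" using P(3) step.hyps(4) by (simp add: P'_def)
      ultimately show ?thesis by (simp add: is_path_Cons)
    qed
    moreover have "supports_path R P' (x # xs)"
      using P(5) supports_path_cong[OF agree, of R] step.hyps(1,3)
      by (simp add: supports_path_def P'_def)
    moreover have "last (x # xs) \<in> diag_pairs" using P(4) \<open>xs \<noteq> []\<close> by simp
    ultimately show ?thesis using step.hyps(1)
      by (auto simp: filter_rel_iff intro!: bexI[of _ P'] exI[of _ "x # xs"])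
  qed
qed

lemma path_F:
  assumes "P \<in> policies \<tau> lab"
  shows "is_path P xs \<Longrightarrow> last xs \<in> diag_pairs \<Longrightarrow> supports_path R P xs \<Longrightarrow> hd xs \<in> FF \<tau> R"
proof (induction xs)
  case Nil then show ?case by (simp add: is_path_def)
next
  case (Cons x xs)
  show ?case
  proof (cases "xs = []")
    case True
    then show ?thesis using Cons.prems(2) by (auto simp: diag_pairs_def intro: FF.diag)
  next
    case False
    have h: "hd xs \<in> set_pmf (P x)" "is_path P xs" using Cons.prems(1) False by (auto simp: is_path_Cons)
    have s: "x \<in> R" "set_pmf (P x) \<subseteq> R" "supports_path R P xs"
      using Cons.prems(3) by (auto simp: supports_path_def)
    have "hd xs \<in> FF \<tau> R" using Cons.IH h(2) Cons.prems(2) s(3) False by simp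
    then show ?thesis
      using FF.step[OF s(1) policy_coupling[OF assms R_nd[OF s(1)]] s(2) h(1)] by simp
  qed
qed

lemma filter_F: "x \<in> filter_rel \<tau> lab R \<Longrightarrow> x \<in> FF \<tau> R"
  using path_F by (auto simp: filter_rel_iff)

lemma F_swap: "x \<in> FF \<tau> R \<Longrightarrow> prod.swap x \<in> FF \<tau> R"
proof (induction rule: FF.induct)
  case (diag a) then show ?case by (simp add: FF.diag)
next
  case (step x \<omega> y)
  have "prod.swap x \<in> R" using step.hyps(1) R_sym by (cases x) auto
  moreover have "map_pmf prod.swap \<omega> \<in> couplings (\<tau> (fst (prod.swap x))) (\<tau> (snd (prod.swap x)))"
    using step.hyps(2) unfolding couplings_def by (simp add: pmf.map_comp comp_def)
  moreover have "set_pmf (map_pmf prod.swap \<omega>) \<subseteq> R"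
    using step.hyps(3) R_sym by auto
  moreover have "prod.swap y \<in> set_pmf (map_pmf prod.swap \<omega>)" using step.hyps(4) by simp
  ultimately show ?case using FF.step step.IH by blast
qed

context
  assumes sub: "robust_bisimilarity \<tau> lab \<subseteq> R"
begin

lemma RB_F_aux:
  assumes P: "P \<in> policies \<tau> lab"
  shows "reaches_almost_surely P diag_pairs x \<Longrightarrow> reach_within P diag_pairs n x > 0 \<Longrightarrow> x \<in> FF \<tau> R"
proof (induction n arbitrary: x)
  case 0
  then show ?case by (auto simp: diag_pairs_def split: if_splits intro: FF.diag)
next
  case (Suc n)
  show ?case
  proof (cases "x \<in> diag_pairs")
    case True then show ?thesis by (auto simp: diag_pairs_def intro: FF.diag)
  next
    case False
    obtain y where y: "y \<in> set_pmf (P x)" "reach_within P diag_pairs n y > 0"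
      using reach_pos_succ[OF Suc.prems(2) False] by auto
    have "y \<in> FF \<tau> R" using Suc.IH[OF reach_succ[OF Suc.prems(1) False y(1)] y(2)] .
    have "x \<in> robust_bisimilarity \<tau> lab" using P Suc.prems(1) RB_iff by blast
    then have xR: "x \<in> R" using sub by blast
    have "set_pmf (P x) \<subseteq> R"
    proof
      fix z assume "z \<in> set_pmf (P x)"
      then have "reaches_almost_surely P diag_pairs z" using reach_succ[OF Suc.prems(1) False] by blast
      then have "z \<in> robust_bisimilarity \<tau> lab" using P RB_iff by blast
      then show "z \<in> R" using sub by blast
    qed
    then show ?thesis
      using FF.step[OF xR policy_coupling[OF P R_nd[OF xR]] _ y(1) \<open>y \<in> FF \<tau> R\<close>] by blast
  qed
qed

lemma RB_F: "x \<in> robust_bisimilarity \<tau> lab \<Longrightarrow> x \<in> FF \<tau> R"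
proof -
  assume "x \<in> robust_bisimilarity \<tau> lab"
  then obtain P where P: "P \<in> policies \<tau> lab" "reaches_almost_surely P diag_pairs x"
    using RB_iff by blast
  obtain n where "reach_within P diag_pairs n x > 0" using reach_pos[OF P(2)] by blast
  then show ?thesis using RB_F_aux[OF P] by blast
qed

lemma lemA: "x \<in> FF \<tau> R \<Longrightarrow> (s, fst x) \<in> robust_bisimilarity \<tau> lab \<Longrightarrow> (s, snd x) \<in> FF \<tau> R"
proof (induction arbitrary: s rule: FF.induct)
  case (diag a) then show ?case using RB_F by simp
next
  case (step x \<omega> y)
  obtain t u where x: "x = (t,u)" by (cases x)
  obtain t' u' where y: "y = (t',u')" by (cases y)
  show ?case
  proof (cases "s = t")
    case True
    then show ?thesis using FF.step[OF step.hyps(1-4)] step.hyps(5) x by simp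
  next
    case False
    obtain P where P: "P \<in> policies \<tau> lab" "reaches_almost_surely P diag_pairs (s,t)"
      using step.prems x by (auto simp: RB_iff)
    have nd: "(s,t) \<notin> diag_pairs" using False by (simp add: diag_pairs_def)
    have stR: "(s,t) \<in> R" using sub step.prems x by auto
    have cp: "P (s,t) \<in> couplings (\<tau> s) (\<tau> t)" using policy_coupling[OF P(1) R_nd[OF stR]] by simp
    have setRB: "set_pmf (P (s,t)) \<subseteq> robust_bisimilarity \<tau> lab"
    proof
      fix z assume "z \<in> set_pmf (P (s,t))"
      then have "reaches_almost_surely P diag_pairs z" using reach_succ[OF P(2) nd] by blast
      then show "z \<in> robust_bisimilarity \<tau> lab" using P(1) RB_iff by blast
    qed
    have "t' \<in> set_pmf (map_pmf fst \<omega>)" using step.hyps(4) y by force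
    moreover have "map_pmf fst \<omega> = map_pmf snd (P (s,t))" using step.hyps(2) cp x
      by (simp add: couplings_def)
    ultimately have "t' \<in> set_pmf (map_pmf snd (P (s,t)))" by metis
    then obtain s'' where s'': "(s'',t') \<in> set_pmf (P (s,t))" by auto
    have "(s'',u') \<in> FF \<tau> R" using step.IH[of s''] s'' setRB y by auto
    have m: "map_pmf snd (P (s,t)) = map_pmf fst \<omega>" using cp step.hyps(2) x by (simp add: couplings_def)
    obtain pr where pr: "map_pmf fst pr = map_pmf fst (P (s,t))" "map_pmf snd pr = map_pmf snd \<omega>"
      "set_pmf pr = {(x,z). \<exists>y. (x,y) \<in> set_pmf (P (s,t)) \<and> (y,z) \<in> set_pmf \<omega>}"
      using glue[OF m] by blast
    have c1: "pr \<in> couplings (\<tau> (fst (s,u))) (\<tau> (snd (s,u)))"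
      using pr(1,2) cp step.hyps(2) x by (simp add: couplings_def)
    have c2: "set_pmf pr \<subseteq> R"
    proof
      fix w assume "w \<in> set_pmf pr"
      then obtain a b c where "w = (a,c)" "(a,b) \<in> set_pmf (P (s,t))" "(b,c) \<in> set_pmf \<omega>"
        using pr(3) by auto
      then show "w \<in> R" using setRB sub step.hyps(3) R_trans by blast
    qed
    have c3: "(s'',u') \<in> set_pmf pr" using pr(3) s'' step.hyps(4) y by auto
    have c4: "(s,u) \<in> R" using R_trans[OF stR] step.hyps(1) x by simp
    have "(s,u) \<in> FF \<tau> R" by (rule FF.step[OF c4 c1 c2 c3 \<open>(s'',u') \<in> FF \<tau> R\<close>])
    then show ?thesis using x by simp
  qed
qed

lemma lemB:
  assumes "(s,t) \<in> FF \<tau> R" "(t,u) \<in> robust_bisimilarity \<tau> lab"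
  shows "(s,u) \<in> FF \<tau> R"
proof -
  have "(t,s) \<in> FF \<tau> R" using F_swap[OF assms(1)] by simp
  moreover have "(u,t) \<in> robust_bisimilarity \<tau> lab" using RB_swap[OF assms(2)] by simp
  ultimately have "(u,s) \<in> FF \<tau> R" using lemA[of "(t,s)" u] by simp
  from F_swap[OF this] show ?thesis by simp
qed

end
end

theorem proposition7:
  fixes \<tau> :: "'s::finite \<Rightarrow> 's pmf" and lab :: "'s \<Rightarrow> 'l" and R :: "('s \<times> 's) set"
    and s t u :: 's
  assumes "card (range lab) \<ge> 2"
    and "bisimulation \<tau> lab R"
    and "robust_bisimilarity \<tau> lab \<subseteq> R" and "R \<subseteq> bisimilarity \<tau> lab"
    and "(s,t) \<in> filter_rel \<tau> lab R" and "(t,u) \<in> filter_rel \<tau> lab R"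
    and "(s,t) \<in> robust_bisimilarity \<tau> lab \<or> (t,u) \<in> robust_bisimilarity \<tau> lab"
  shows "(s,u) \<in> filter_rel \<tau> lab R"
proof -
  have F1: "(s,t) \<in> FF \<tau> R" and F2: "(t,u) \<in> FF \<tau> R"
    using filter_F[OF assms(2)] assms(5,6) by auto
  have "(s,u) \<in> FF \<tau> R"
    using assms(7)
  proof
    assume "(s,t) \<in> robust_bisimilarity \<tau> lab"
    then show ?thesis using lemA[OF assms(2,3) F2, of s] by simp
  next
    assume "(t,u) \<in> robust_bisimilarity \<tau> lab"
    then show ?thesis using lemB[OF assms(2,3) F1] by simp
  qed
  then show ?thesis using F_sub_filter[OF assms(2)] by simp
qed

end
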